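(* Let $X=X_1\cdots X_n$ with independent $X_i\sim\mathrm{Bernoulli}(p_i)$, $p=(p_1,\dots,p_n)\in[0,1]^n$, and let $Y$ be the output of a deletion channel (deletion probability $\delta$) with input $X$. Let $y=y_1\cdots y_m$ be an observed trace with $\Pr(Y=y)>0$. Then for every $i\in\{1,\dots,n\}$, $$\Pr(X_i=1\mid Y=y)=\frac{p_i}{\mathbf F(p,y)}\left(\mathbf F(p_{[n]\setminus\{i\}},y)+\sum_{k:\,y_k=1}\mathbf F(p_{[1:i-1]},y_{[1:k-1]})\,\mathbf F(p_{[i+1:n]},y_{[k+1:m]})\right).$$
   Context: The deletion channel with deletion probability $\delta$ deletes each input symbol independently with probability $\delta$ and outputs the subsequence of undeleted symbols. For integers $a,b$, $[a:b]=\{a,\dots,b\}$ if $b\ge a$ and $\emptyset$ otherwise; $[n]=[1:n]$; $p_T$ denotes the subvector of $p$ indexed by $T$ and $y_T$ the corresponding subsequence of $y$ (empty when $T=\emptyset$). The relaxed binomial coefficient $\mathbf F:[0,1]^{n'}\times\{0,1\}^{m'}\to\mathbb R$ is: if $1\le m'\le n'$, $\mathbf F(q,v)=\sum_{S\subseteq[n'],|S|=m'}\prod_{j=1}^{m'} q_{S_j}^{v_j}(1-q_{S_j})^{1-v_j}$ with $S_1<\dots<S_{m'}$ the elements of $S$; if $m'=0\le n'$, $\mathbf F(q,v)=1$; otherwise $\mathbf F(q,v)=0$. *)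

theory Defs
  imports "HOL-Probability.Probability_Mass_Function"
begin

text \<open>Input X = X_1...X_n with independent X_i ~ Bernoulli(p_i), as a random bool list
  (True = symbol 1).\<close>
fun bern_list :: "real list \<Rightarrow> bool list pmf" where
  "bern_list [] = return_pmf []"
| "bern_list (q # qs) =
     bind_pmf (bernoulli_pmf q) (\<lambda>b. bind_pmf (bern_list qs) (\<lambda>bs. return_pmf (b # bs)))"

fun deletion_channel :: "real \<Rightarrow> bool list \<Rightarrow> bool list pmf" where
  "deletion_channel d [] = return_pmf []"
| "deletion_channel d (b # bs) =
     bind_pmf (bernoulli_pmf d) (\<lambda>del. bind_pmf (deletion_channel d bs)
        (\<lambda>r. return_pmf (if del then r else b # r)))"

definition joint_XY :: "real list \<Rightarrow> real \<Rightarrow> (bool list \<times> bool list) pmf" where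
  "joint_XY p d = bind_pmf (bern_list p) (\<lambda>x. map_pmf (\<lambda>y. (x, y)) (deletion_channel d x))"

text \<open>Relaxed binomial coefficient F(q,v); lists are 0-indexed, S_j is the j-th smallest
  element of S.\<close>
definition relaxed_binom :: "real list \<Rightarrow> bool list \<Rightarrow> real" where
  "relaxed_binom q v =
     (if 1 \<le> length v \<and> length v \<le> length q then
        (\<Sum>S\<in>{S. S \<subseteq> {0..<length q} \<and> card S = length v}.
           \<Prod>j<length v. (let s = sorted_list_of_set S ! j in
              (q ! s) ^ (if v ! j then 1 else 0) * (1 - q ! s) ^ (if v ! j then 0 else 1)))
      else if length v = 0 then 1 else 0)"

end

theory Submission
  imports Defs
begin

lemma joint_Nil: "joint_XY [] d = return_pmf ([],[])"
  by (simp add: joint_XY_def bind_return_pmf)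

lemma joint_Cons: "joint_XY (q#qs) d = bind_pmf (bernoulli_pmf q) (\<lambda>b. bind_pmf (bernoulli_pmf d)
   (\<lambda>del. map_pmf (\<lambda>(x,y). (b#x, if del then y else b#y)) (joint_XY qs d)))"
proof -
  have "joint_XY (q#qs) d = bind_pmf (bernoulli_pmf q) (\<lambda>b. bind_pmf (bern_list qs) (\<lambda>x. bind_pmf (bernoulli_pmf d)
   (\<lambda>del. map_pmf (\<lambda>y. (b#x, if del then y else b#y)) (deletion_channel d x))))"
    by (simp add: joint_XY_def bind_assoc_pmf bind_return_pmf map_bind_pmf map_pmf_def)
  also have "\<dots> = bind_pmf (bernoulli_pmf q) (\<lambda>b. bind_pmf (bernoulli_pmf d) (\<lambda>del. bind_pmf (bern_list qs) (\<lambda>x. 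
   map_pmf (\<lambda>y. (b#x, if del then y else b#y)) (deletion_channel d x))))"
    by (subst bind_commute_pmf) simp
  also have "\<dots> = bind_pmf (bernoulli_pmf q) (\<lambda>b. bind_pmf (bernoulli_pmf d)
   (\<lambda>del. map_pmf (\<lambda>(x,y). (b#x, if del then y else b#y)) (joint_XY qs d)))"
    by (simp add: joint_XY_def map_bind_pmf pmf.map_comp o_def)
  finally show ?thesis .
qed

lemma measure_bind_bern:
  assumes "0 \<le> q" "q \<le> 1"
  shows "measure_pmf.prob (bind_pmf (bernoulli_pmf q) N) X =
     q * measure_pmf.prob (N True) X + (1-q) * measure_pmf.prob (N False) X"
proof -
  have "ennreal (measure_pmf.prob (bind_pmf (bernoulli_pmf q) N) X) =
      ennreal (measure_pmf.prob (N True) X) * q + ennreal (measure_pmf.prob (N False) X) * (1-q)"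
    using assms by (simp add: measure_pmf.emeasure_eq_measure[symmetric])
  also have "\<dots> = ennreal (q * measure_pmf.prob (N True) X + (1-q) * measure_pmf.prob (N False) X)"
    using assms by (simp add: ennreal_mult'' ennreal_plus[symmetric] mult.commute)
  finally show ?thesis
    using assms by (subst (asm) ennreal_inj) auto
qed


definition w :: "real \<Rightarrow> bool \<Rightarrow> real" where "w q b = (if b then q else 1 - q)"

fun R :: "real \<Rightarrow> real list \<Rightarrow> bool list \<Rightarrow> real" where
  "R d [] y = (if y = [] then 1 else 0)"
| "R d (q#qs) y = d * R d qs y + (1-d) * (case y of [] \<Rightarrow> 0 | b#y' \<Rightarrow> w q b * R d qs y')"

lemma prob_joint_Cons:
  assumes "0 \<le> q" "q \<le> 1" "0 \<le> d" "d \<le> 1"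
  shows "measure_pmf.prob (joint_XY (q#qs) d) X =
    q * (d * measure_pmf.prob (joint_XY qs d) {xy. (True # fst xy, snd xy) \<in> X}
       + (1-d) * measure_pmf.prob (joint_XY qs d) {xy. (True # fst xy, True # snd xy) \<in> X})
  + (1-q) * (d * measure_pmf.prob (joint_XY qs d) {xy. (False # fst xy, snd xy) \<in> X}
       + (1-d) * measure_pmf.prob (joint_XY qs d) {xy. (False # fst xy, False # snd xy) \<in> X})"
  unfolding joint_Cons using assms
  by (simp add: measure_bind_bern vimage_def case_prod_beta)

lemma A_eq:
  assumes "\<forall>q\<in>set p. 0 \<le> q \<and> q \<le> 1" "0 \<le> d" "d \<le> 1"
  shows "measure_pmf.prob (joint_XY p d) {xy. snd xy = y} = R d p y"
  using assms(1)
proof (induction p arbitrary: y)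
  case Nil
  then show ?case by (simp add: joint_Nil indicator_def)
next
  case (Cons q qs)
  have q: "0 \<le> q" "q \<le> 1" using Cons.prems by auto
  have IH: "\<And>y. measure_pmf.prob (joint_XY qs d) {xy. snd xy = y} = R d qs y"
    using Cons by auto
  show ?case
  proof (cases y)
    case Nil
    then show ?thesis using q assms IH by (simp add: prob_joint_Cons algebra_simps)
  next
    case (Cons b y')
    have e: "{xy. c # snd xy = b # y'} = (if c = b then {xy. snd xy = y'} else {})" for c
      by auto
    show ?thesis using q assms IH Cons by (cases b) (simp_all add: prob_joint_Cons e w_def algebra_simps)
  qed
qed


definition Sm :: "real \<Rightarrow> nat \<Rightarrow> real list \<Rightarrow> bool list \<Rightarrow> real" where
  "Sm d i p y = (\<Sum>k<length y. if y!k then R d (take i p) (take k y) * R d (drop (Suc i) p) (drop (Suc k) y) else 0)"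

lemma Sm_0: "Sm d 0 (q#qs) y = (case y of [] \<Rightarrow> 0 | b#y' \<Rightarrow> if b then R d qs y' else 0)"
proof (cases y)
  case (Cons b y')
  have "(\<Sum>k<length y'. if y' ! k then R d (take 0 (q # qs)) (take (Suc k) (b # y')) *
         R d (drop (Suc 0) (q # qs)) (drop (Suc (Suc k)) (b # y')) else 0) = 0"
    by (rule sum.neutral) auto
  then show ?thesis using Cons by (simp add: Sm_def sum.lessThan_Suc_shift del: sum.lessThan_Suc)
qed (simp add: Sm_def)

lemma Sm_Suc: "Sm d (Suc i) (q#qs) y = d * Sm d i qs y + (1-d) * (case y of [] \<Rightarrow> 0 | b#y' \<Rightarrow> w q b * Sm d i qs y')"
proof -
  define T where "T = (\<Sum>k<length y. if y!k then (case take k y of [] \<Rightarrow> 0 | b#z \<Rightarrow> w q b * R d (take i qs) z) * R d (drop (Suc i) qs) (drop (Suc k) y) else 0)"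
  have "Sm d (Suc i) (q#qs) y = d * Sm d i qs y + (1-d) * T"
    unfolding Sm_def T_def sum_distrib_left sum.distrib[symmetric]
    by (rule sum.cong) (auto simp: algebra_simps)
  moreover have "T = (case y of [] \<Rightarrow> 0 | b#y' \<Rightarrow> w q b * Sm d i qs y')"
  proof (cases y)
    case (Cons b y')
    show ?thesis unfolding T_def Sm_def Cons
      by (simp add: sum.lessThan_Suc_shift sum_distrib_left cong: if_cong del: sum.lessThan_Suc)
        (rule sum.cong, auto)
  qed (simp add: T_def)
  ultimately show ?thesis by simp
qed

lemma B_eq:
  assumes "\<forall>q\<in>set p. 0 \<le> q \<and> q \<le> 1" "0 \<le> d" "d \<le> 1" "i < length p"
  shows "measure_pmf.prob (joint_XY p d) {xy. snd xy = y \<and> fst xy ! i} =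
     p ! i * (d * R d (take i p @ drop (Suc i) p) y + (1-d) * Sm d i p y)"
  using assms(1,4)
proof (induction p arbitrary: i y)
  case Nil
  then show ?case by simp
next
  case (Cons q qs)
  have q: "0 \<le> q" "q \<le> 1" using Cons.prems by auto
  have A: "\<And>y. measure_pmf.prob (joint_XY qs d) {xy. snd xy = y} = R d qs y"
    using Cons.prems assms by (intro A_eq) auto
  show ?case
  proof (cases i)
    case 0
    have e: "{xy. c # snd xy = y \<and> c} = (case y of [] \<Rightarrow> {} | b#y' \<Rightarrow> if c = b \<and> c then {xy. snd xy = y'} else {})" for c
      by (cases y) auto
    show ?thesis using q assms 0 A
      by (cases y) (simp_all add: prob_joint_Cons e Sm_0 algebra_simps)
  next
    case (Suc i')
    have IH: "\<And>y. measure_pmf.prob (joint_XY qs d) {xy. snd xy = y \<and> fst xy ! i'} =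
     qs ! i' * (d * R d (take i' qs @ drop (Suc i') qs) y + (1-d) * Sm d i' qs y)"
      using Cons Suc by auto
    show ?thesis
    proof (cases y)
      case Nil
      then show ?thesis using q assms Suc by (simp add: prob_joint_Cons IH Sm_Suc algebra_simps)
    next
      case (Cons b y')
      have e: "{xy. c # snd xy = b # y' \<and> P xy} = (if c = b then {xy. snd xy = y' \<and> P xy} else {})" for c P
        by auto
      show ?thesis using q assms Cons Suc
        by (cases b) (simp_all add: prob_joint_Cons e IH w_def Sm_Suc algebra_simps)
    qed
  qed
qed


lemma sl_Suc: assumes "finite T"
  shows "sorted_list_of_set (Suc ` T) = map Suc (sorted_list_of_set T)"
proof -
  have "sorted_wrt (<) (map Suc (sorted_list_of_set T))"
    using sorted_list_of_set.strict_sorted_key_list_of_set[of T]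
    by (simp add: sorted_wrt_map)
  moreover have "length (map Suc (sorted_list_of_set T)) = card (Suc ` T)"
    using assms by (simp add: card_image)
  ultimately show ?thesis
    using assms by (subst sorted_list_of_set_unique[symmetric]) (auto simp: assms)
qed

lemma sl_ins0: assumes "finite T"
  shows "sorted_list_of_set (insert 0 (Suc ` T)) = 0 # map Suc (sorted_list_of_set T)"
proof -
  have "sorted_wrt (<) (0 # map Suc (sorted_list_of_set T))"
    using sorted_list_of_set.strict_sorted_key_list_of_set[of T]
    by (simp add: sorted_wrt_map)
  moreover have "length (0 # map Suc (sorted_list_of_set T)) = card (insert 0 (Suc ` T))"
    using assms by (simp add: card_image)
  ultimately show ?thesis
    using assms by (subst sorted_list_of_set_unique[symmetric]) (auto simp: assms)
qed


fun Fr :: "real list \<Rightarrow> bool list \<Rightarrow> real" where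
  "Fr [] v = (if v = [] then 1 else 0)"
| "Fr (a#qs) v = Fr qs v + (case v of [] \<Rightarrow> 0 | b#v' \<Rightarrow> w a b * Fr qs v')"

definition G :: "real list \<Rightarrow> bool list \<Rightarrow> real" where
  "G q v = (\<Sum>S\<in>{S. S \<subseteq> {0..<length q} \<and> card S = length v}.
     \<Prod>j<length v. w (q ! (sorted_list_of_set S ! j)) (v ! j))"

lemma G_Nil: "G [] v = (if v = [] then 1 else 0)"
proof -
  have "{S. S \<subseteq> {0..<0::nat} \<and> card S = length v} = (if v = [] then {{}} else {})"
    by auto
  then show ?thesis by (simp add: G_def)
qed

lemma bij0: "bij_betw (image Suc) {T. T \<subseteq> {0..<n} \<and> card T = m}
    {S. S \<subseteq> {0..<Suc n} \<and> card S = m \<and> 0 \<notin> S}"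
proof (rule bij_betw_byWitness[where f' = "\<lambda>S. {t. Suc t \<in> S}"])
  show "\<forall>a\<in>{T. T \<subseteq> {0..<n} \<and> card T = m}. {t. Suc t \<in> Suc ` a} = a" by auto
  show "\<forall>a'\<in>{S. S \<subseteq> {0..<Suc n} \<and> card S = m \<and> 0 \<notin> S}. Suc ` {t. Suc t \<in> a'} = a'"
    apply auto
    by (metis image_eqI mem_Collect_eq not0_implies_Suc)
  show "image Suc ` {T. T \<subseteq> {0..<n} \<and> card T = m} \<subseteq> {S. S \<subseteq> {0..<Suc n} \<and> card S = m \<and> 0 \<notin> S}"
    by (auto simp: card_image)
  show "(\<lambda>S. {t. Suc t \<in> S}) ` {S. S \<subseteq> {0..<Suc n} \<and> card S = m \<and> 0 \<notin> S} \<subseteq> {T. T \<subseteq> {0..<n} \<and> card T = m}"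
  proof safe
    fix S assume S: "S \<subseteq> {0..<Suc n}" "0 \<notin> S"
    then have "Suc ` {t. Suc t \<in> S} = S"
      by auto (metis image_eqI mem_Collect_eq not0_implies_Suc)
    then show "card {t. Suc t \<in> S} = card S"
      by (metis card_image inj_Suc inj_on_subset subset_UNIV)
  qed auto
qed

lemma bij1: "bij_betw (\<lambda>T. insert 0 (Suc ` T)) {T. T \<subseteq> {0..<n} \<and> card T = m}
    {S. S \<subseteq> {0..<Suc n} \<and> card S = Suc m \<and> 0 \<in> S}"
proof (rule bij_betw_byWitness[where f' = "\<lambda>S. {t. Suc t \<in> S}"])
  show "\<forall>a\<in>{T. T \<subseteq> {0..<n} \<and> card T = m}. {t. Suc t \<in> insert 0 (Suc ` a)} = a" by auto
  show "\<forall>a'\<in>{S. S \<subseteq> {0..<Suc n} \<and> card S = Suc m \<and> 0 \<in> S}. insert 0 (Suc ` {t. Suc t \<in> a'}) = a'"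
    apply auto
    by (metis image_eqI mem_Collect_eq not0_implies_Suc)
  show "(\<lambda>T. insert 0 (Suc ` T)) ` {T. T \<subseteq> {0..<n} \<and> card T = m} \<subseteq> {S. S \<subseteq> {0..<Suc n} \<and> card S = Suc m \<and> 0 \<in> S}"
  proof safe
    fix T assume "T \<subseteq> {0..<n}" "m = card T"
    then show "card (insert 0 (Suc ` T)) = Suc (card T)"
      by (subst card_insert_disjoint) (auto simp: card_image finite_subset)
  qed auto
  show "(\<lambda>S. {t. Suc t \<in> S}) ` {S. S \<subseteq> {0..<Suc n} \<and> card S = Suc m \<and> 0 \<in> S} \<subseteq> {T. T \<subseteq> {0..<n} \<and> card T = m}"
  proof safe
    fix S assume S: "S \<subseteq> {0..<Suc n}" "0 \<in> S" "card S = Suc m"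
    then have e: "insert 0 (Suc ` {t. Suc t \<in> S}) = S"
      by auto (metis image_eqI mem_Collect_eq not0_implies_Suc)
    have f: "finite {t. Suc t \<in> S}"
    proof (rule finite_subset[of _ "{0..<n}"])
      show "{t. Suc t \<in> S} \<subseteq> {0..<n}" using S(1) by auto
    qed simp
    have "card S = Suc (card {t. Suc t \<in> S})"
      by (subst e[symmetric], subst card_insert_disjoint) (auto simp: card_image f)
    then show "card {t. Suc t \<in> S} = m" using S by simp
  qed auto
qed


lemma G_Cons: "G (a#qs) v = G qs v + (case v of [] \<Rightarrow> 0 | b#v' \<Rightarrow> w a b * G qs v')"
proof -
  define n where "n = length qs"
  define m where "m = length v"
  define f where "f S = (\<Prod>j<m. w ((a#qs) ! (sorted_list_of_set S ! j)) (v ! j))" for S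
  define A0 where "A0 = {S. S \<subseteq> {0..<Suc n} \<and> card S = m \<and> 0 \<notin> S}"
  define A1 where "A1 = {S. S \<subseteq> {0..<Suc n} \<and> card S = m \<and> 0 \<in> S}"
  have fin: "finite A0" "finite A1" unfolding A0_def A1_def
    by (rule finite_subset[of _ "Pow {0..<Suc n}"], auto)+
  have split: "{S. S \<subseteq> {0..<length (a#qs)} \<and> card S = length v} = A0 \<union> A1"
    unfolding A0_def A1_def n_def m_def by auto
  have "G (a#qs) v = sum f A0 + sum f A1"
    unfolding G_def split f_def m_def using fin
    by (subst sum.union_disjoint) (auto simp: A0_def A1_def)
  moreover have "sum f A0 = G qs v"
  proof -
    have "sum f A0 = (\<Sum>T\<in>{T. T \<subseteq> {0..<n} \<and> card T = m}. f (Suc ` T))"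
      unfolding A0_def by (rule sum.reindex_bij_betw[OF bij0, symmetric])
    also have "\<dots> = G qs v"
      unfolding G_def n_def[symmetric] m_def[symmetric]
    proof (rule sum.cong[OF refl])
      fix T assume T: "T \<in> {T. T \<subseteq> {0..<n} \<and> card T = m}"
      then have fT: "finite T" by (auto intro: finite_subset)
      show "f (Suc ` T) = (\<Prod>j<m. w (qs ! (sorted_list_of_set T ! j)) (v ! j))"
        unfolding f_def sl_Suc[OF fT]
        by (rule prod.cong) (use T fT in auto)
    qed
    finally show ?thesis .
  qed
  moreover have "sum f A1 = (case v of [] \<Rightarrow> 0 | b#v' \<Rightarrow> w a b * G qs v')"
  proof (cases v)
    case Nil
    have "S \<notin> A1" for S
    proof
      assume "S \<in> A1"
      then have "S \<subseteq> {0..<Suc n}" "card S = 0" "0 \<in> S" using Nil by (auto simp: A1_def m_def)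
      moreover have "finite S" by (rule finite_subset[OF \<open>S \<subseteq> {0..<Suc n}\<close>]) simp
      ultimately show False by auto
    qed
    then have "A1 = {}" by blast
    then show ?thesis using Nil by simp
  next
    case (Cons b v')
    then have m: "m = Suc (length v')" by (simp add: m_def)
    have "sum f A1 = (\<Sum>T\<in>{T. T \<subseteq> {0..<n} \<and> card T = length v'}. f (insert 0 (Suc ` T)))"
      unfolding A1_def m by (rule sum.reindex_bij_betw[OF bij1, symmetric])
    also have "\<dots> = w a b * G qs v'"
      unfolding G_def n_def[symmetric] sum_distrib_left
    proof (rule sum.cong[OF refl])
      fix T assume T: "T \<in> {T. T \<subseteq> {0..<n} \<and> card T = length v'}"
      then have fT: "finite T" by (auto intro: finite_subset)
      have "f (insert 0 (Suc ` T)) = w a b * (\<Prod>j<length v'. w ((a#qs) ! (Suc (sorted_list_of_set T ! j))) (v' ! j))"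
        unfolding f_def sl_ins0[OF fT] m Cons
        by (subst prod.lessThan_Suc_shift) (use T fT in auto)
      also have "\<dots> = w a b * (\<Prod>j<length v'. w (qs ! (sorted_list_of_set T ! j)) (v' ! j))"
        by simp
      finally show "f (insert 0 (Suc ` T)) = w a b * (\<Prod>j<length v'. w (qs ! (sorted_list_of_set T ! j)) (v' ! j))" .
    qed
    finally show ?thesis using Cons by simp
  qed
  ultimately show ?thesis by simp
qed

lemma G_Fr: "G q v = Fr q v"
  by (induction q arbitrary: v) (simp_all add: G_Nil G_Cons split: list.split)

lemma rb_G: "relaxed_binom q v = G q v"
proof -
  consider "1 \<le> length v \<and> length v \<le> length q" | "length v = 0" | "length v > length q"
    by linarith
  then show ?thesis
  proof cases
    case 1
    then show ?thesis unfolding relaxed_binom_def G_def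
      by (simp add: Let_def, intro sum.cong prod.cong refl) (simp add: w_def)
  next
    case 2
    have "{S. S \<subseteq> {0..<length q} \<and> card S = 0} = {{}}"
      using finite_subset[of _ "{0..<length q}"] by fastforce
    then show ?thesis using 2 unfolding relaxed_binom_def G_def by simp
  next
    case 3
    have e: "{S. S \<subseteq> {0..<length q} \<and> card S = length v} = {}"
      using 3 by auto (metis card_atLeastLessThan card_mono finite_atLeastLessThan diff_zero not_le)
    show ?thesis using 3 unfolding relaxed_binom_def G_def e by auto
  qed
qed


lemma pw: "Suc a \<le> b \<Longrightarrow> (x::real) * x ^ (b - Suc a) = x ^ (b - a)"
proof -
  assume "Suc a \<le> b"
  then have "b - a = Suc (b - Suc a)" by arith
  then show ?thesis by simp
qed

lemma Fr_zero: "length q < length v \<Longrightarrow> Fr q v = 0"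
  by (induction q arbitrary: v) (auto split: list.split)

lemma R_Fr: "R d p y = d ^ (length p - length y) * (1-d) ^ length y * Fr p y"
proof (induction p arbitrary: y)
  case Nil
  then show ?case by simp
next
  case (Cons q qs)
  show ?case
  proof (cases y)
    case Nil
    then show ?thesis using Cons by simp
  next
    case (Cons b y')
    show ?thesis
    proof (cases "length y \<le> length qs")
      case True
      have pwf: "d * d ^ (length qs - Suc (length y')) = d ^ (length qs - length y')"
        using Cons True by (simp add: pw)
      have "R d (q#qs) y = d * (d ^ (length qs - length y) * (1-d)^length y * Fr qs y) + (1-d) * (w q b * (d^(length qs - length y') * (1-d)^length y' * Fr qs y'))"
        using Cons by (simp add: Cons.IH)
      also have "\<dots> = (d * d ^ (length qs - Suc (length y'))) * (1-d) * (1-d)^length y' * Fr qs y + d^(length qs - length y') * (1-d) * (1-d)^length y' * (w q b * Fr qs y')"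
        using Cons by (simp add: algebra_simps)
      also have "\<dots> = d ^ (length (q#qs) - length y) * (1-d) ^ length y * Fr (q#qs) y"
        using Cons by (simp only: pwf) (simp add: algebra_simps)
      finally show ?thesis .
    next
      case False
      then show ?thesis using Cons \<open>\<And>y. R d qs y = _\<close> Fr_zero[of qs y]
        by (simp add: algebra_simps)
    qed
  qed
qed

lemma nths_del: "i < length p \<Longrightarrow> nths p ({0..<length p} - {i}) = take i p @ drop (Suc i) p"
proof (induction p arbitrary: i)
  case Nil
  then show ?case by simp
next
  case (Cons a p)
  have e: "{j. Suc j \<in> {0..<Suc (length p)} - {i}} = {0..<length p} - {i - 1}" if "i > 0"
    using that by auto
  have e0: "{j. Suc j \<in> {0..<Suc (length p)} - {0}} = {0..<length p}" by auto
  show ?case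
  proof (cases i)
    case 0
    then show ?thesis by (simp add: nths_Cons e0 nths_all)
  next
    case (Suc i')
    then have e': "{j. Suc j \<in> {0..<Suc (length p)} - {i}} = {0..<length p} - {i'}" by auto
    then show ?thesis using Cons Suc by (simp add: nths_Cons)
  qed
qed

lemma term_eq:
  assumes "k < length y" "i < length p"
  shows "(1-d) * (R d (take i p) (take k y) * R d (drop (Suc i) p) (drop (Suc k) y)) =
    d ^ (length p - length y) * (1-d) ^ length y * (Fr (take i p) (take k y) * Fr (drop (Suc i) p) (drop (Suc k) y))"
proof (cases "k \<le> i \<and> length y - Suc k \<le> length p - Suc i")
  case True
  have e1: "d ^ (i - k) * d ^ (length p - Suc i - (length y - Suc k)) = d ^ (length p - length y)"
  proof -
    have "(i - k) + (length p - Suc i - (length y - Suc k)) = length p - length y"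
      using True assms by arith
    then show ?thesis by (simp add: power_add[symmetric])
  qed
  have e2: "(1-d) * ((1-d) ^ k * (1-d) ^ (length y - Suc k)) = (1-d) ^ length y"
  proof -
    have "Suc (k + (length y - Suc k)) = length y" using assms by arith
    then show ?thesis by (metis power_add power_Suc)
  qed
  have "(1-d) * (R d (take i p) (take k y) * R d (drop (Suc i) p) (drop (Suc k) y)) =
    (d ^ (i - k) * d ^ (length p - Suc i - (length y - Suc k))) * ((1-d) * ((1-d) ^ k * (1-d) ^ (length y - Suc k)))
     * (Fr (take i p) (take k y) * Fr (drop (Suc i) p) (drop (Suc k) y))"
    using assms by (simp add: R_Fr min_def mult_ac)
  also have "\<dots> = d ^ (length p - length y) * (1-d) ^ length y * (Fr (take i p) (take k y) * Fr (drop (Suc i) p) (drop (Suc k) y))"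
    by (simp only: e1 e2)
  finally show ?thesis .
next
  case False
  then have "Fr (take i p) (take k y) = 0 \<or> Fr (drop (Suc i) p) (drop (Suc k) y) = 0"
    using assms by (auto intro!: Fr_zero)
  then show ?thesis by (auto simp: R_Fr)
qed

lemma del_eq:
  assumes "i < length p"
  shows "d * R d (take i p @ drop (Suc i) p) y = d ^ (length p - length y) * (1-d) ^ length y * Fr (take i p @ drop (Suc i) p) y"
proof (cases "length y \<le> length p - 1")
  case True
  then have "d * d ^ (length p - 1 - length y) = d ^ (length p - length y)"
    using assms by (simp add: pw)
  then show ?thesis using assms by (simp add: R_Fr algebra_simps)
next
  case False
  then show ?thesis using assms Fr_zero[of "take i p @ drop (Suc i) p" y] by (simp add: R_Fr)
qed

theorem theorem6:
  fixes p :: "real list" and d :: real and y :: "bool list" and i :: nat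
  assumes p_range: "\<forall>q\<in>set p. 0 \<le> q \<and> q \<le> 1"
    and d_range: "0 \<le> d" "d \<le> 1"
    and pos: "measure_pmf.prob (joint_XY p d) {xy. snd xy = y} > 0"
    and i_range: "i < length p"
  shows "measure_pmf.prob (joint_XY p d) {xy. snd xy = y \<and> fst xy ! i}
           / measure_pmf.prob (joint_XY p d) {xy. snd xy = y}
         = p ! i / relaxed_binom p y *
           (relaxed_binom (nths p ({0..<length p} - {i})) y
            + (\<Sum>k\<in>{k. k < length y \<and> y ! k}.
                 relaxed_binom (take i p) (take k y) * relaxed_binom (drop (i+1) p) (drop (k+1) y)))"
proof -
  define c where "c = d ^ (length p - length y) * (1-d) ^ length y"
  define H where "H = Fr (take i p @ drop (Suc i) p) y + (\<Sum>k\<in>{k. k < length y \<and> y ! k}.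
                 Fr (take i p) (take k y) * Fr (drop (Suc i) p) (drop (Suc k) y))"
  have A: "measure_pmf.prob (joint_XY p d) {xy. snd xy = y} = c * Fr p y"
    using A_eq[OF p_range d_range] by (simp add: R_Fr c_def)
  have sum_eq: "{k. k < length y \<and> y ! k} = {k \<in> {..<length y}. y ! k}" by auto
  have "(1-d) * Sm d i p y = (\<Sum>k<length y. if y!k then (1-d) * (R d (take i p) (take k y) * R d (drop (Suc i) p) (drop (Suc k) y)) else 0)"
    unfolding Sm_def sum_distrib_left by (rule sum.cong) auto
  also have "\<dots> = (\<Sum>k<length y. if y!k then c * (Fr (take i p) (take k y) * Fr (drop (Suc i) p) (drop (Suc k) y)) else 0)"
    by (rule sum.cong[OF refl]) (simp add: term_eq[OF _ i_range] c_def)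
  also have "\<dots> = (\<Sum>k\<in>{k. k < length y \<and> y ! k}. c * (Fr (take i p) (take k y) * Fr (drop (Suc i) p) (drop (Suc k) y)))"
    unfolding sum_eq by (subst sum.inter_filter) auto
  also have "\<dots> = c * (\<Sum>k\<in>{k. k < length y \<and> y ! k}. Fr (take i p) (take k y) * Fr (drop (Suc i) p) (drop (Suc k) y))"
    by (simp add: sum_distrib_left)
  finally have S: "(1-d) * Sm d i p y = c * (\<Sum>k\<in>{k. k < length y \<and> y ! k}. Fr (take i p) (take k y) * Fr (drop (Suc i) p) (drop (Suc k) y))" .
  have B: "measure_pmf.prob (joint_XY p d) {xy. snd xy = y \<and> fst xy ! i} = p ! i * (c * H)"
  proof -
    have "measure_pmf.prob (joint_XY p d) {xy. snd xy = y \<and> fst xy ! i} =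
       p ! i * (d * R d (take i p @ drop (Suc i) p) y + (1-d) * Sm d i p y)"
      by (rule B_eq[OF p_range d_range i_range])
    also have "\<dots> = p ! i * (c * H)"
      unfolding del_eq[OF i_range] c_def[symmetric] S H_def by (simp add: distrib_left)
    finally show ?thesis .
  qed
  have nz: "c \<noteq> 0" "Fr p y \<noteq> 0" using pos A by auto
  show ?thesis
    unfolding A B rb_G G_Fr nths_del[OF i_range] H_def[symmetric]
    using nz by (simp add: H_def)
qed

end
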